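(* Let $p\ge1$, $k\ge1$, $r\in\{0,\dots,p-1\}$, $\alpha\in\mathbb R^{p\times r}$ with $\operatorname{rank}\alpha=r$, $\bar b<\infty$ and $\bar\rho<1$. Let $\mathcal B\subset\mathbb R^{kp\times[p(k-1)+r]}$ be closed with $\max_{\boldsymbol\beta\in\mathcal B}\|\boldsymbol\beta\|\le\bar b$ and $\rho_{JSR}(\{I_{p(k-1)+r}+\boldsymbol\beta^\top\boldsymbol\alpha:\boldsymbol\beta\in\mathcal B\})\le\bar\rho$. Then for every $\boldsymbol\beta\in\mathcal B$ the $kp\times kp$ matrix $\begin{bmatrix}\boldsymbol\alpha_\perp^\top\\\boldsymbol\beta^\top\end{bmatrix}$ is invertible, and $$\sup_{\boldsymbol\beta\in\mathcal B}\left\|\begin{bmatrix}\boldsymbol\alpha_\perp^\top\\\boldsymbol\beta^\top\end{bmatrix}^{-1}\right\|<\infty.$$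
   Context: $D\in\mathbb R^{p(k-1)\times p(k-1)}$ has $-I_p$ diagonal blocks, $I_p$ blocks immediately above the diagonal, zeros elsewhere (blocks empty when $k=1$); $E=(I_p,0_{p\times p(k-2)})^\top\in\mathbb R^{p(k-1)\times p}$. $\alpha_\perp$ is a $p\times(p-r)$ matrix of rank $p-r$ with $\alpha_\perp^\top\alpha=0$. $\boldsymbol\alpha=\begin{bmatrix}\alpha & E^\top\\ 0 & I_{p(k-1)}\end{bmatrix}\in\mathbb R^{kp\times[r+p(k-1)]}$ and $\boldsymbol\alpha_\perp=\begin{bmatrix}I_p\\-E\end{bmatrix}\alpha_\perp\in\mathbb R^{kp\times(p-r)}$. Joint spectral radius: $\rho_{JSR}(\mathcal A)=\limsup_{t}\sup\{\rho(M_1\cdots M_t)^{1/t}:M_s\in\mathcal A\}$, $\rho$ the spectral radius. Matrix norms are operator norms induced by the Euclidean norm. *)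

theory Defs
  imports "HOL-Analysis.Analysis" "Jordan_Normal_Form.Spectral_Radius" "Jordan_Normal_Form.DL_Rank"
    "Jordan_Normal_Form.Gauss_Jordan_Elimination"
begin

definition vnorm :: "real vec \<Rightarrow> real" where
  "vnorm v = sqrt (\<Sum>i<dim_vec v. (v $ i)^2)"

definition op_norm :: "real mat \<Rightarrow> real" where
  "op_norm A = Sup {vnorm (A *\<^sub>v x) | x. x \<in> carrier_vec (dim_col A) \<and> vnorm x \<le> 1}"

definition rspec_rad :: "real mat \<Rightarrow> real" where
  "rspec_rad A = spectral_radius (map_mat complex_of_real A)"

definition jsr :: "nat \<Rightarrow> real mat set \<Rightarrow> ereal" where
  "jsr n S = limsup (\<lambda>t. SUP Ms \<in> {Ms. length Ms = t \<and> set Ms \<subseteq> S}.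
      ereal (rspec_rad (foldr (*) Ms (1\<^sub>m n)) powr (1 / real t)))"

definition closed_mat_set :: "nat \<Rightarrow> nat \<Rightarrow> real mat set \<Rightarrow> bool" where
  "closed_mat_set nr nc S \<longleftrightarrow> S \<subseteq> carrier_mat nr nc \<and>
     (\<forall>X L. (\<forall>m. X m \<in> S) \<longrightarrow> L \<in> carrier_mat nr nc \<longrightarrow>
        (\<forall>i<nr. \<forall>j<nc. (\<lambda>m. X m $$ (i,j)) \<longlonglongrightarrow> L $$ (i,j)) \<longrightarrow> L \<in> S)"

definition E_mat :: "nat \<Rightarrow> nat \<Rightarrow> real mat" where
  "E_mat p k = mat (p*(k-1)) p (\<lambda>(i,j). if i = j then 1 else 0)"

definition bold_alpha :: "nat \<Rightarrow> nat \<Rightarrow> real mat \<Rightarrow> real mat" where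
  "bold_alpha p k \<alpha> = four_block_mat \<alpha> (transpose_mat (E_mat p k))
      (0\<^sub>m (p*(k-1)) (dim_col \<alpha>)) (1\<^sub>m (p*(k-1)))"

definition bold_alpha_perp :: "nat \<Rightarrow> nat \<Rightarrow> real mat \<Rightarrow> real mat" where
  "bold_alpha_perp p k \<alpha>perp = ((1\<^sub>m p) @\<^sub>r (- E_mat p k)) * \<alpha>perp"

end

theory Submission
  imports Defs
begin
unbundle no vec_syntax


lemma rank_kernel:
  fixes A :: "real mat"
  assumes A: "A \<in> carrier_mat n nc" and rk: "vec_space.rank n A = nc"
    and v: "v \<in> carrier_vec nc" and Av: "A *\<^sub>v v = 0\<^sub>v n"
  shows "v = 0\<^sub>v nc"
proof (rule ccontr)
  interpret VS: vec_space "TYPE(real)" n .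
  assume v0: "v \<noteq> 0\<^sub>v nc"
  show False
  proof (cases "distinct (cols A)")
    case True
    have "VS.lin_indpt (set (cols A))" using VS.full_rank_lin_indpt[OF A rk True] .
    then show False using VS.lin_depI[OF A v v0 Av True] by blast
  next
    case False
    obtain S where S: "maximal S (\<lambda>T. T \<subseteq> set (cols A) \<and> VS.lin_indpt T)"
      using maximal_exists[of "(\<lambda>T. T \<subseteq> set (cols A) \<and> VS.lin_indpt T)" "card (set (cols A))" "{}"]
      by (meson List.finite_set card_mono empty_iff empty_subsetI VS.finite_lin_indpt2 rev_finite_subset)
    then have "card S \<le> card (set (cols A))" by (simp add: card_mono maximal_def)
    then have "card S < nc"
      using A cols_length card_length \<open>\<not> distinct (cols A)\<close> card_distinct carrier_matD(2) nat_less_le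
      by (metis dual_order.antisym dual_order.trans)
    then show False using VS.rank_card_indpt[OF A S] rk by simp
  qed
qed

lemma self_scalar_zero:
  fixes u :: "real vec"
  assumes u: "u \<in> carrier_vec n" and z: "u \<bullet> u = 0"
  shows "u = 0\<^sub>v n"
proof (rule eq_vecI)
  have "(\<Sum>i\<in>{0..<n}. u $ i * u $ i) = 0" using z u unfolding scalar_prod_def by simp
  then have "\<forall>i\<in>{0..<n}. u $ i * u $ i = 0"
    by (subst sum_nonneg_eq_0_iff[symmetric]) auto
  then show "\<And>i. i < dim_vec (0\<^sub>v n) \<Longrightarrow> u $ i = 0\<^sub>v n $ i" by auto
qed (use u in auto)

lemma gram_kernel:
  fixes A :: "real mat"
  assumes A: "A \<in> carrier_mat n m" and v: "v \<in> carrier_vec m"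
    and z: "transpose_mat A *\<^sub>v (A *\<^sub>v v) = 0\<^sub>v m"
  shows "A *\<^sub>v v = 0\<^sub>v n"
proof -
  have "(transpose_mat A *\<^sub>v (A *\<^sub>v v)) \<bullet> v = (A *\<^sub>v v) \<bullet> (A *\<^sub>v v)"
    by (rule transpose_vec_mult_scalar[OF A v], use A v in auto)
  then have "(A *\<^sub>v v) \<bullet> (A *\<^sub>v v) = 0" using z v by simp
  then show ?thesis by (rule self_scalar_zero[rotated], use A v in auto)
qed

lemma smult_smult_mat: "(a::real) \<cdot>\<^sub>m (b \<cdot>\<^sub>m B) = (a*b) \<cdot>\<^sub>m B"
  by (rule eq_matI) auto

lemma one_smult_mat: "(1::real) \<cdot>\<^sub>m B = B"
  by (rule eq_matI) auto

lemma inv_from_det: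
  fixes A :: "real mat"
  assumes A: "A \<in> carrier_mat n n" and d: "det A \<noteq> 0"
  shows "A * ((1 / det A) \<cdot>\<^sub>m adj_mat A) = 1\<^sub>m n" "((1 / det A) \<cdot>\<^sub>m adj_mat A) * A = 1\<^sub>m n"
    "(1 / det A) \<cdot>\<^sub>m adj_mat A \<in> carrier_mat n n"
proof -
  note adj = adj_mat[OF A]
  show "A * ((1 / det A) \<cdot>\<^sub>m adj_mat A) = 1\<^sub>m n"
    using mult_smult_distrib[OF A adj(1)] adj(2) d by (simp add: smult_smult_mat one_smult_mat)
  show "((1 / det A) \<cdot>\<^sub>m adj_mat A) * A = 1\<^sub>m n"
    using mult_smult_assoc_mat[OF adj(1) A] adj(3) d by (simp add: smult_smult_mat one_smult_mat)
  show "(1 / det A) \<cdot>\<^sub>m adj_mat A \<in> carrier_mat n n" using adj(1) by simp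
qed

lemma trivial_kernel_invertible:
  fixes A :: "real mat"
  assumes A: "A \<in> carrier_mat n n"
    and K: "\<And>v. v \<in> carrier_vec n \<Longrightarrow> A *\<^sub>v v = 0\<^sub>v n \<Longrightarrow> v = 0\<^sub>v n"
  shows "det A \<noteq> 0"
  using det_0_iff_vec_prod_zero_field[OF A] K by blast



lemma zero_append_vec: "0\<^sub>v a @\<^sub>v 0\<^sub>v b = (0\<^sub>v (a+b) :: real vec)"
  by (rule eq_vecI) auto

lemma zero_mat_mult_vec: "a \<in> carrier_vec m \<Longrightarrow> (0\<^sub>m n m :: real mat) *\<^sub>v a = 0\<^sub>v n"
  by (rule eq_vecI) (auto simp: mult_mat_vec_def scalar_prod_def)

lemma mat_mult_zero_vec: "A \<in> carrier_mat n m \<Longrightarrow> (A :: real mat) *\<^sub>v 0\<^sub>v m = 0\<^sub>v n"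
  by (rule eq_vecI) (auto simp: mult_mat_vec_def scalar_prod_def)

lemma complement:
  fixes \<alpha> \<alpha>p :: "real mat"
  assumes rp: "r \<le> p" and \<alpha>: "\<alpha> \<in> carrier_mat p r" and r\<alpha>: "vec_space.rank p \<alpha> = r"
    and \<alpha>p: "\<alpha>p \<in> carrier_mat p (p - r)" and r\<alpha>p: "vec_space.rank p \<alpha>p = p - r"
    and orth: "transpose_mat \<alpha>p * \<alpha> = 0\<^sub>m (p - r) r"
    and z: "z \<in> carrier_vec p" and z0: "transpose_mat \<alpha>p *\<^sub>v z = 0\<^sub>v (p - r)"
  shows "\<exists>w \<in> carrier_vec r. z = \<alpha> *\<^sub>v w"
proof -
  define q where "q = p - r"
  have pq: "p = r + q" using rp q_def by simp
  have \<alpha>pq: "\<alpha>p \<in> carrier_mat p q" using \<alpha>p q_def by simp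
  have \<alpha>pT: "transpose_mat \<alpha>p \<in> carrier_mat q p" using \<alpha>pq by simp
  define Q where "Q = mat p p (\<lambda>(i,j). if j < r then \<alpha> $$ (i,j) else \<alpha>p $$ (i,j-r))"
  have Q: "Q \<in> carrier_mat p p" unfolding Q_def by simp
  have Qmult: "Q *\<^sub>v (a @\<^sub>v d) = \<alpha> *\<^sub>v a + \<alpha>p *\<^sub>v d"
    if a: "a \<in> carrier_vec r" and d: "d \<in> carrier_vec q" for a d
  proof (rule eq_vecI)
    fix i assume "i < dim_vec (\<alpha> *\<^sub>v a + \<alpha>p *\<^sub>v d)"
    then have i: "i < p" using \<alpha>pq by simp
    have "row Q i = row \<alpha> i @\<^sub>v row \<alpha>p i"
      by (rule eq_vecI, use i \<alpha> \<alpha>pq pq in \<open>auto simp: Q_def\<close>)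
    then have "(Q *\<^sub>v (a @\<^sub>v d)) $ i = (row \<alpha> i @\<^sub>v row \<alpha>p i) \<bullet> (a @\<^sub>v d)"
      using i Q by simp
    also have "\<dots> = row \<alpha> i \<bullet> a + row \<alpha>p i \<bullet> d"
      by (rule scalar_prod_append, use \<alpha> \<alpha>pq a d i in auto)
    finally show "(Q *\<^sub>v (a @\<^sub>v d)) $ i = (\<alpha> *\<^sub>v a + \<alpha>p *\<^sub>v d) $ i"
      using i \<alpha> \<alpha>pq by simp
  qed (use Q \<alpha> \<alpha>pq in simp)
  have key: "d = 0\<^sub>v q" if d: "d \<in> carrier_vec q" and h: "transpose_mat \<alpha>p *\<^sub>v (\<alpha>p *\<^sub>v d) = 0\<^sub>v q" for d
  proof -
    have "\<alpha>p *\<^sub>v d = 0\<^sub>v p" by (rule gram_kernel[OF \<alpha>pq d h])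
    then show ?thesis using rank_kernel[OF \<alpha>pq _ d] r\<alpha>p q_def by simp
  qed
  have orthv: "transpose_mat \<alpha>p *\<^sub>v (\<alpha> *\<^sub>v a) = 0\<^sub>v q" if a: "a \<in> carrier_vec r" for a
  proof -
    have "transpose_mat \<alpha>p *\<^sub>v (\<alpha> *\<^sub>v a) = (transpose_mat \<alpha>p * \<alpha>) *\<^sub>v a"
      using assoc_mult_mat_vec[OF \<alpha>pT \<alpha> a] by simp
    also have "\<dots> = 0\<^sub>v q" using orth a q_def zero_mat_mult_vec by simp
    finally show ?thesis .
  qed
  have split: "transpose_mat \<alpha>p *\<^sub>v (\<alpha> *\<^sub>v a + \<alpha>p *\<^sub>v d) = transpose_mat \<alpha>p *\<^sub>v (\<alpha>p *\<^sub>v d)"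
    if a: "a \<in> carrier_vec r" and d: "d \<in> carrier_vec q" for a d
    using mult_add_distrib_mat_vec[OF \<alpha>pT, of "\<alpha> *\<^sub>v a" "\<alpha>p *\<^sub>v d"] orthv[OF a] \<alpha> \<alpha>pq a d
    by simp
  have "det Q \<noteq> 0"
  proof (rule trivial_kernel_invertible[OF Q])
    fix v assume v: "v \<in> carrier_vec p" and Qv: "Q *\<^sub>v v = 0\<^sub>v p"
    define a where "a = vec_first v r"
    define d where "d = vec_last v q"
    have va: "v = a @\<^sub>v d" using v pq unfolding a_def d_def by simp
    have a: "a \<in> carrier_vec r" and d: "d \<in> carrier_vec q" unfolding a_def d_def by auto
    have e: "\<alpha> *\<^sub>v a + \<alpha>p *\<^sub>v d = 0\<^sub>v p" using Qv Qmult[OF a d] va by simp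
    have "transpose_mat \<alpha>p *\<^sub>v (\<alpha>p *\<^sub>v d) = 0\<^sub>v q"
      using split[OF a d] e \<alpha>pT mat_mult_zero_vec[OF \<alpha>pT] by simp
    then have d0: "d = 0\<^sub>v q" using key d by blast
    then have "\<alpha> *\<^sub>v a = 0\<^sub>v p" using e \<alpha> a mat_mult_zero_vec[OF \<alpha>pq] by simp
    then have a0: "a = 0\<^sub>v r" using rank_kernel[OF \<alpha> r\<alpha> a] by simp
    show "v = 0\<^sub>v p" using va a0 d0 pq zero_append_vec by simp
  qed
  define Qi where "Qi = (1 / det Q) \<cdot>\<^sub>m adj_mat Q"
  note QI = inv_from_det[OF Q \<open>det Q \<noteq> 0\<close>, folded Qi_def]
  define v where "v = Qi *\<^sub>v z"
  have v: "v \<in> carrier_vec p" unfolding v_def using QI(3) z by simp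
  have "Q *\<^sub>v v = z" unfolding v_def using assoc_mult_mat_vec[OF Q QI(3) z] QI(1) z by simp
  define a where "a = vec_first v r"
  define d where "d = vec_last v q"
  have va: "v = a @\<^sub>v d" using v pq unfolding a_def d_def by simp
  have a: "a \<in> carrier_vec r" and d: "d \<in> carrier_vec q" unfolding a_def d_def by auto
  have zz: "z = \<alpha> *\<^sub>v a + \<alpha>p *\<^sub>v d" using \<open>Q *\<^sub>v v = z\<close> Qmult[OF a d] va by simp
  have "transpose_mat \<alpha>p *\<^sub>v (\<alpha>p *\<^sub>v d) = 0\<^sub>v q"
    using split[OF a d] zz z0 q_def by simp
  then have "d = 0\<^sub>v q" using key d by blast
  then have "z = \<alpha> *\<^sub>v a" using zz \<alpha> a mat_mult_zero_vec[OF \<alpha>pq] by simp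
  then show ?thesis using a by blast
qed



lemma foldr_rep:
  fixes M :: "real mat"
  assumes M: "M \<in> carrier_mat n n" and y: "y \<in> carrier_vec n" and My: "M *\<^sub>v y = y"
  shows "foldr (*) (replicate t M) (1\<^sub>m n) \<in> carrier_mat n n \<and> foldr (*) (replicate t M) (1\<^sub>m n) *\<^sub>v y = y"
proof (induction t)
  case 0
  then show ?case using y by simp
next
  case (Suc t)
  define P where "P = foldr (*) (replicate t M) (1\<^sub>m n)"
  have P: "P \<in> carrier_mat n n" "P *\<^sub>v y = y" using Suc unfolding P_def by auto
  have "foldr (*) (replicate (Suc t) M) (1\<^sub>m n) = M * P" unfolding P_def by simp
  moreover have "(M * P) *\<^sub>v y = y" using assoc_mult_mat_vec[OF M P(1) y] P(2) My by simp
  ultimately show ?case using M P by simp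
qed

lemma complexify_eig:
  fixes P :: "real mat"
  assumes P: "P \<in> carrier_mat n n" and y: "y \<in> carrier_vec n" and y0: "y \<noteq> 0\<^sub>v n"
    and Py: "P *\<^sub>v y = y"
  shows "1 \<le> rspec_rad P"
proof -
  let ?P = "map_mat complex_of_real P"
  let ?y = "map_vec complex_of_real y"
  have cP: "?P \<in> carrier_mat n n" using P by simp
  have n: "n > 0" 
  proof (rule ccontr)
    assume "\<not> n > 0"
    then have "y = 0\<^sub>v n" using y by (intro eq_vecI) auto
    then show False using y0 by simp
  qed
  have "?P *\<^sub>v ?y = ?y"
  proof (rule eq_vecI)
    fix i assume "i < dim_vec ?y"
    then have i: "i < n" using y by simp
    have "(?P *\<^sub>v ?y) $ i = (\<Sum>j = 0..<n. complex_of_real (P $$ (i,j)) * complex_of_real (y $ j))"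
      using P y i by (simp add: mult_mat_vec_def scalar_prod_def)
    also have "\<dots> = complex_of_real (\<Sum>j = 0..<n. P $$ (i,j) * y $ j)" by simp
    also have "(\<Sum>j = 0..<n. P $$ (i,j) * y $ j) = (P *\<^sub>v y) $ i"
      using P y i by (simp add: mult_mat_vec_def scalar_prod_def)
    finally show "(?P *\<^sub>v ?y) $ i = ?y $ i" using Py i y by simp
  qed (use P y in simp)
  moreover have "?y \<noteq> 0\<^sub>v n"
  proof
    assume "?y = 0\<^sub>v n"
    then have "y = 0\<^sub>v n" by (intro eq_vecI) (use y in \<open>auto dest: arg_cong[where f="\<lambda>v. v $ _"]\<close>)
    then show False using y0 by simp
  qed
  ultimately have "eigenvector ?P ?y 1" unfolding eigenvector_def using cP y by simp
  then have "1 \<in> spectrum ?P" unfolding spectrum_def eigenvalue_def by auto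
  then have "norm (1::complex) \<in> norm ` spectrum ?P" by (rule imageI)
  then have "norm (1::complex) \<le> spectral_radius ?P"
    by (rule spectral_radius_mem_max(2)[OF cP n])
  then show ?thesis unfolding rspec_rad_def by simp
qed

lemma jsr_ge_1:
  fixes M :: "real mat"
  assumes M: "M \<in> carrier_mat n n" and MS: "M \<in> S" and y: "y \<in> carrier_vec n"
    and y0: "y \<noteq> 0\<^sub>v n" and My: "M *\<^sub>v y = y"
  shows "1 \<le> jsr n S"
proof -
  have "\<forall>t. (1::ereal) \<le> (SUP Ms \<in> {Ms. length Ms = t \<and> set Ms \<subseteq> S}.
      ereal (rspec_rad (foldr (*) Ms (1\<^sub>m n)) powr (1 / real t)))"
  proof
    fix t
    have F: "foldr (*) (replicate t M) (1\<^sub>m n) \<in> carrier_mat n n"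
      "foldr (*) (replicate t M) (1\<^sub>m n) *\<^sub>v y = y" using foldr_rep[OF M y My] by auto
    have "1 \<le> rspec_rad (foldr (*) (replicate t M) (1\<^sub>m n))"
      by (rule complexify_eig[OF F(1) y y0 F(2)])
    then have "1 \<le> rspec_rad (foldr (*) (replicate t M) (1\<^sub>m n)) powr (1 / real t)"
      by (intro ge_one_powr_ge_zero) auto
    then show "(1::ereal) \<le> (SUP Ms \<in> {Ms. length Ms = t \<and> set Ms \<subseteq> S}.
      ereal (rspec_rad (foldr (*) Ms (1\<^sub>m n)) powr (1 / real t)))"
      by (intro SUP_upper2[of "replicate t M"]) (use MS in auto)
  qed
  then show ?thesis unfolding jsr_def by (intro le_Limsup) auto
qed



lemma S_entry:
  assumes i: "i < p + p*(k-1)" and l: "l < p"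
  shows "(1\<^sub>m p @\<^sub>r (- E_mat p k)) $$ (i,l) = (if i = l then 1 else 0) - (if i = p + l then 1 else 0)"
  using i l unfolding append_rows_def E_mat_def by auto

lemma ST_entry:
  assumes x: "x \<in> carrier_vec (p + p*(k-1))" and l: "l < p"
  shows "(transpose_mat (1\<^sub>m p @\<^sub>r (- E_mat p k)) *\<^sub>v x) $ l
    = x $ l - (if l < p*(k-1) then x $ (p+l) else 0)"
proof -
  let ?S = "1\<^sub>m p @\<^sub>r (- E_mat p k)"
  have S: "?S \<in> carrier_mat (p + p*(k-1)) p" unfolding E_mat_def by auto
  have "(transpose_mat ?S *\<^sub>v x) $ l = (\<Sum>i\<in>{0..<p + p*(k-1)}. ?S $$ (i,l) * x $ i)"
    using S x l by (simp add: scalar_prod_def)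
  also have "\<dots> = (\<Sum>i\<in>{0..<p + p*(k-1)}. (if i = l then x $ i else 0) - (if i = p + l then x $ i else 0))"
    by (rule sum.cong, simp, subst S_entry, use l in \<open>auto simp: algebra_simps\<close>)
  also have "\<dots> = x $ l - (if l < p*(k-1) then x $ (p+l) else 0)"
    using l by (simp add: sum_subtractf)
  finally show ?thesis .
qed

lemma T_mult:
  assumes \<alpha>p: "\<alpha>p \<in> carrier_mat p q" and x: "x \<in> carrier_vec (p + p*(k-1))"
  shows "transpose_mat (bold_alpha_perp p k \<alpha>p) *\<^sub>v x
    = transpose_mat \<alpha>p *\<^sub>v (transpose_mat (1\<^sub>m p @\<^sub>r (- E_mat p k)) *\<^sub>v x)"
proof -
  let ?S = "1\<^sub>m p @\<^sub>r (- E_mat p k)"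
  have S: "?S \<in> carrier_mat (p + p*(k-1)) p" unfolding E_mat_def by auto
  have "transpose_mat (bold_alpha_perp p k \<alpha>p) = transpose_mat \<alpha>p * transpose_mat ?S"
    unfolding bold_alpha_perp_def by (rule transpose_mult[OF S \<alpha>p])
  then show ?thesis using assoc_mult_mat_vec[of "transpose_mat \<alpha>p" q p "transpose_mat ?S" "p + p*(k-1)" x] \<alpha>p S x
    by simp
qed

lemma balpha_mult:
  assumes \<alpha>: "\<alpha> \<in> carrier_mat p r" and w: "w \<in> carrier_vec r" and x2: "x2 \<in> carrier_vec (p*(k-1))"
  shows "bold_alpha p k \<alpha> *\<^sub>v (w @\<^sub>v x2) = (\<alpha> *\<^sub>v w + transpose_mat (E_mat p k) *\<^sub>v x2) @\<^sub>v x2"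
proof -
  have E: "transpose_mat (E_mat p k) \<in> carrier_mat p (p*(k-1))" unfolding E_mat_def by auto
  have "bold_alpha p k \<alpha> *\<^sub>v (w @\<^sub>v x2) = (\<alpha> *\<^sub>v w + transpose_mat (E_mat p k) *\<^sub>v x2) @\<^sub>v
     (0\<^sub>m (p*(k-1)) r *\<^sub>v w + 1\<^sub>m (p*(k-1)) *\<^sub>v x2)"
    unfolding bold_alpha_def using \<alpha>
    by (subst four_block_mat_mult_vec[OF \<alpha> E _ _ w x2]) auto
  also have "0\<^sub>m (p*(k-1)) r *\<^sub>v w + 1\<^sub>m (p*(k-1)) *\<^sub>v x2 = x2"
    using zero_mat_mult_vec[OF w] x2 by simp
  finally show ?thesis .
qed

lemma ET_entry:
  assumes x2: "x2 \<in> carrier_vec (p*(k-1))" and i: "i < p"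
  shows "(transpose_mat (E_mat p k) *\<^sub>v x2) $ i = (if i < p*(k-1) then x2 $ i else 0)"
proof -
  have "(transpose_mat (E_mat p k) *\<^sub>v x2) $ i = (\<Sum>j\<in>{0..<p*(k-1)}. (if j = i then 1 else 0) * x2 $ j)"
    using x2 i unfolding E_mat_def by (auto simp: scalar_prod_def intro!: sum.cong)
  also have "\<dots> = (\<Sum>j\<in>{0..<p*(k-1)}. (if j = i then x2 $ j else 0))"
    by (rule sum.cong) auto
  finally show ?thesis by simp
qed



lemma G_kernel:
  fixes \<alpha> \<alpha>p \<beta> :: "real mat"
  assumes k1: "k \<ge> 1" and rp: "r \<le> p"
    and \<alpha>: "\<alpha> \<in> carrier_mat p r" and r\<alpha>: "vec_space.rank p \<alpha> = r"
    and \<alpha>p: "\<alpha>p \<in> carrier_mat p (p - r)" and r\<alpha>p: "vec_space.rank p \<alpha>p = p - r"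
    and orth: "transpose_mat \<alpha>p * \<alpha> = 0\<^sub>m (p - r) r"
    and \<beta>: "\<beta> \<in> carrier_mat (k*p) (p*(k-1)+r)"
    and noeig: "\<And>y. y \<in> carrier_vec (p*(k-1)+r) \<Longrightarrow>
        (1\<^sub>m (p*(k-1)+r) + transpose_mat \<beta> * bold_alpha p k \<alpha>) *\<^sub>v y = y \<Longrightarrow> y = 0\<^sub>v (p*(k-1)+r)"
    and x: "x \<in> carrier_vec (k*p)"
    and Gx: "(transpose_mat (bold_alpha_perp p k \<alpha>p) @\<^sub>r transpose_mat \<beta>) *\<^sub>v x = 0\<^sub>v (k*p)"
  shows "x = 0\<^sub>v (k*p)"
proof -
  define m where "m = p*(k-1)"
  have kp: "k*p = p + m" unfolding m_def using k1
    by (metis Suc_diff_le diff_Suc_1 mult.commute mult_Suc_right)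
  let ?S = "1\<^sub>m p @\<^sub>r (- E_mat p k)"
  have S: "?S \<in> carrier_mat (p + m) p" unfolding E_mat_def m_def by auto
  have BP: "bold_alpha_perp p k \<alpha>p \<in> carrier_mat (p + m) (p - r)"
    unfolding bold_alpha_perp_def using S \<alpha>p by auto
  have T: "transpose_mat (bold_alpha_perp p k \<alpha>p) \<in> carrier_mat (p - r) (p + m)" using BP by simp
  have \<beta>T: "transpose_mat \<beta> \<in> carrier_mat (m + r) (p + m)" using \<beta> kp m_def by simp
  have x': "x \<in> carrier_vec (p + m)" using x kp by simp
  have "(transpose_mat (bold_alpha_perp p k \<alpha>p) *\<^sub>v x) @\<^sub>v (transpose_mat \<beta> *\<^sub>v x)
      = 0\<^sub>v (p - r) @\<^sub>v 0\<^sub>v (m + r)"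
    using Gx mat_mult_append[OF T \<beta>T x'] zero_append_vec[of "p - r" "m + r"] kp rp by simp
  then have Tx: "transpose_mat (bold_alpha_perp p k \<alpha>p) *\<^sub>v x = 0\<^sub>v (p - r)"
    and \<beta>x: "transpose_mat \<beta> *\<^sub>v x = 0\<^sub>v (m + r)"
    using append_vec_eq[OF mult_mat_vec_carrier[OF T x'] zero_carrier_vec] by auto
  define z where "z = transpose_mat ?S *\<^sub>v x"
  have z: "z \<in> carrier_vec p" unfolding z_def using S x' by simp
  have zT: "transpose_mat \<alpha>p *\<^sub>v z = 0\<^sub>v (p - r)"
    using Tx T_mult[OF \<alpha>p, of x k] x' m_def unfolding z_def by simp
  obtain w where w: "w \<in> carrier_vec r" and zw: "z = \<alpha> *\<^sub>v w"
    using complement[OF rp \<alpha> r\<alpha> \<alpha>p r\<alpha>p orth z zT] by blast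
  define x2 where "x2 = vec_last x m"
  have x2: "x2 \<in> carrier_vec m" unfolding x2_def by simp
  define y where "y = w @\<^sub>v x2"
  have y: "y \<in> carrier_vec (m + r)" unfolding y_def using append_carrier_vec[OF w x2] by (simp add: add.commute)
  have By: "bold_alpha p k \<alpha> *\<^sub>v y = x"
  proof -
    have "bold_alpha p k \<alpha> *\<^sub>v y = (\<alpha> *\<^sub>v w + transpose_mat (E_mat p k) *\<^sub>v x2) @\<^sub>v x2"
      unfolding y_def using balpha_mult[OF \<alpha> w, of x2 k] x2 m_def by simp
    also have "\<alpha> *\<^sub>v w + transpose_mat (E_mat p k) *\<^sub>v x2 = vec_first x p"
    proof (rule eq_vecI)
      fix i assume "i < dim_vec (vec_first x p)"
      then have i: "i < p" by simp
      have "(\<alpha> *\<^sub>v w + transpose_mat (E_mat p k) *\<^sub>v x2) $ i = z $ i + (transpose_mat (E_mat p k) *\<^sub>v x2) $ i"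
        using i \<alpha> x2 zw m_def unfolding E_mat_def by simp
      also have "\<dots> = x $ i" unfolding z_def
        using ST_entry[OF _ i, of x k] ET_entry[of x2 p k i] x' x2 i m_def
        unfolding x2_def by (auto simp: vec_last_def)
      finally show "(\<alpha> *\<^sub>v w + transpose_mat (E_mat p k) *\<^sub>v x2) $ i = vec_first x p $ i"
        using i by (simp add: vec_first_def)
    qed (use \<alpha> in \<open>simp add: E_mat_def\<close>)
    finally show ?thesis using x' unfolding x2_def by simp
  qed
  have Bc: "bold_alpha p k \<alpha> \<in> carrier_mat (p + m) (m + r)"
    unfolding bold_alpha_def E_mat_def m_def using \<alpha> by (auto simp: add.commute)
  have "(1\<^sub>m (m + r) + transpose_mat \<beta> * bold_alpha p k \<alpha>) *\<^sub>v y = y"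
  proof -
    have "(1\<^sub>m (m + r) + transpose_mat \<beta> * bold_alpha p k \<alpha>) *\<^sub>v y
       = 1\<^sub>m (m + r) *\<^sub>v y + (transpose_mat \<beta> * bold_alpha p k \<alpha>) *\<^sub>v y"
      by (rule add_mult_distrib_mat_vec, use \<beta>T Bc y in auto)
    also have "(transpose_mat \<beta> * bold_alpha p k \<alpha>) *\<^sub>v y = transpose_mat \<beta> *\<^sub>v x"
      using assoc_mult_mat_vec[OF \<beta>T Bc y] By by simp
    finally show ?thesis using \<beta>x y by simp
  qed
  then have "y = 0\<^sub>v (m + r)" using noeig[of y] y m_def by simp
  then show ?thesis using By Bc kp mat_mult_zero_vec[OF Bc] by simp
qed



definition absum :: "real mat \<Rightarrow> real" where
  "absum A = (\<Sum>i<dim_row A. \<Sum>j<dim_col A. \<bar>A $$ (i,j)\<bar>)"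

lemma vnorm_L2: "vnorm v = L2_set (\<lambda>i. v $ i) {..<dim_vec v}"
  unfolding vnorm_def L2_set_def by simp

lemma abs_le_vnorm: assumes j: "j < dim_vec x" shows "\<bar>x $ j\<bar> \<le> vnorm x"
proof -
  have "(x $ j)^2 \<le> (\<Sum>i<dim_vec x. (x $ i)^2)"
    by (rule member_le_sum[where f="\<lambda>i. (x $ i)^2"]) (use j in auto)
  then have "sqrt ((x $ j)^2) \<le> vnorm x" unfolding vnorm_def by (rule real_sqrt_le_mono)
  then show ?thesis by simp
qed

lemma vnorm_le_sum_abs: "vnorm v \<le> (\<Sum>i<dim_vec v. \<bar>v $ i\<bar>)"
  unfolding vnorm_L2 by (rule L2_set_le_sum_abs)

lemma vnorm_nonneg: "0 \<le> vnorm v" unfolding vnorm_def by (simp add: sum_nonneg)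

lemma absum_nonneg: "0 \<le> absum A" unfolding absum_def by (simp add: sum_nonneg)

lemma vnorm_mult_le:
  assumes x: "x \<in> carrier_vec (dim_col A)"
  shows "vnorm (A *\<^sub>v x) \<le> absum A * vnorm x"
proof -
  have row: "\<bar>(A *\<^sub>v x) $ i\<bar> \<le> (\<Sum>j<dim_col A. \<bar>A $$ (i,j)\<bar>) * vnorm x" if i: "i < dim_row A" for i
  proof -
    have "(A *\<^sub>v x) $ i = (\<Sum>j<dim_col A. A $$ (i,j) * x $ j)"
      using i x by (simp add: scalar_prod_def lessThan_atLeast0)
    then have "\<bar>(A *\<^sub>v x) $ i\<bar> \<le> (\<Sum>j<dim_col A. \<bar>A $$ (i,j) * x $ j\<bar>)"
      by (simp add: sum_abs)
    also have "\<dots> \<le> (\<Sum>j<dim_col A. \<bar>A $$ (i,j)\<bar> * vnorm x)"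
      by (rule sum_mono) (use x abs_le_vnorm in \<open>auto simp: abs_mult intro!: mult_left_mono\<close>)
    finally show ?thesis by (simp add: sum_distrib_right)
  qed
  have "vnorm (A *\<^sub>v x) \<le> (\<Sum>i<dim_row A. \<bar>(A *\<^sub>v x) $ i\<bar>)"
    using vnorm_le_sum_abs[of "A *\<^sub>v x"] by simp
  also have "\<dots> \<le> (\<Sum>i<dim_row A. (\<Sum>j<dim_col A. \<bar>A $$ (i,j)\<bar>) * vnorm x)"
    by (rule sum_mono) (use row in auto)
  also have "\<dots> = absum A * vnorm x" unfolding absum_def by (simp add: sum_distrib_right)
  finally show ?thesis .
qed

lemma op_norm_set_bdd:
  "bdd_above {vnorm (A *\<^sub>v x) | x. x \<in> carrier_vec (dim_col A) \<and> vnorm x \<le> 1}"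
proof (rule bdd_aboveI[where M="absum A"])
  fix y assume "y \<in> {vnorm (A *\<^sub>v x) | x. x \<in> carrier_vec (dim_col A) \<and> vnorm x \<le> 1}"
  then obtain x where x: "x \<in> carrier_vec (dim_col A)" "vnorm x \<le> 1" and y: "y = vnorm (A *\<^sub>v x)" by auto
  have "y \<le> absum A * vnorm x" using vnorm_mult_le[OF x(1)] y by simp
  also have "\<dots> \<le> absum A * 1" by (rule mult_left_mono[OF x(2) absum_nonneg])
  finally show "y \<le> absum A" by simp
qed

lemma op_norm_le_absum: "op_norm A \<le> absum A"
  unfolding op_norm_def
proof (rule cSup_least)
  show "{vnorm (A *\<^sub>v x) | x. x \<in> carrier_vec (dim_col A) \<and> vnorm x \<le> 1} \<noteq> {}"
  proof -
    have "vnorm (A *\<^sub>v 0\<^sub>v (dim_col A)) \<in> {vnorm (A *\<^sub>v x) | x. x \<in> carrier_vec (dim_col A) \<and> vnorm x \<le> 1}"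
      by (rule CollectI, rule exI[of _ "0\<^sub>v (dim_col A)"]) (auto simp: vnorm_def)
    then show ?thesis by blast
  qed
  fix y assume "y \<in> {vnorm (A *\<^sub>v x) | x. x \<in> carrier_vec (dim_col A) \<and> vnorm x \<le> 1}"
  then obtain x where x: "x \<in> carrier_vec (dim_col A)" "vnorm x \<le> 1" and y: "y = vnorm (A *\<^sub>v x)" by auto
  have "y \<le> absum A * vnorm x" using vnorm_mult_le[OF x(1)] y by simp
  also have "\<dots> \<le> absum A * 1" by (rule mult_left_mono[OF x(2) absum_nonneg])
  finally show "y \<le> absum A" by simp
qed

lemma entry_le_op_norm:
  assumes i: "i < dim_row A" and j: "j < dim_col A"
  shows "\<bar>A $$ (i,j)\<bar> \<le> op_norm A"
proof -
  let ?e = "unit_vec (dim_col A) j :: real vec"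
  have e: "?e \<in> carrier_vec (dim_col A)" by simp
  have "vnorm ?e = sqrt (\<Sum>l<dim_col A. (if l = j then 1 else 0))"
    unfolding vnorm_def by (rule arg_cong[where f=sqrt], rule sum.cong) (use j in auto)
  also have "\<dots> = 1" using j by simp
  finally have ve: "vnorm ?e = 1" .
  have "(A *\<^sub>v ?e) $ i = A $$ (i,j)" using i j by (simp add: row_def)
  then have "\<bar>A $$ (i,j)\<bar> \<le> vnorm (A *\<^sub>v ?e)" using abs_le_vnorm[of i "A *\<^sub>v ?e"] i by simp
  also have "\<dots> \<le> op_norm A" unfolding op_norm_def
    by (rule cSup_upper[OF _ op_norm_set_bdd]) (use e ve in auto)
  finally show ?thesis .
qed



lemma subseq_finite_set:
  fixes X :: "nat \<Rightarrow> real mat"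
  assumes bnd: "\<And>m i j. i < nr \<Longrightarrow> j < nc \<Longrightarrow> \<bar>X m $$ (i,j)\<bar> \<le> K"
  shows "finite I \<Longrightarrow> I \<subseteq> {..<nr} \<times> {..<nc} \<Longrightarrow>
    \<exists>s. strict_mono s \<and> (\<forall>(i,j)\<in>I. convergent (\<lambda>m. X (s m) $$ (i,j)))"
proof (induction I rule: finite_induct)
  case empty
  then show ?case by (intro exI[of _ id]) (auto simp: strict_mono_def)
next
  case (insert ij I)
  obtain a b where ij: "ij = (a,b)" by (cases ij)
  have ab: "a < nr" "b < nc" using insert(4) ij by auto
  obtain s where s: "strict_mono s" "\<forall>(i,j)\<in>I. convergent (\<lambda>m. X (s m) $$ (i,j))"
    using insert by auto
  let ?u = "\<lambda>m. X (s m) $$ (a,b)"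
  have "bounded (range ?u)"
    unfolding bounded_iff using bnd[OF ab] by (intro exI[of _ K]) auto
  then obtain l t where t: "strict_mono t" "(?u \<circ> t) \<longlonglongrightarrow> l"
    using bounded_imp_convergent_subsequence by blast
  show ?case
  proof (intro exI[of _ "s \<circ> t"] conjI)
    show "strict_mono (s \<circ> t)" using s(1) t(1) by (rule strict_mono_o)
    show "\<forall>(i,j)\<in>insert ij I. convergent (\<lambda>m. X ((s \<circ> t) m) $$ (i,j))"
    proof (intro ballI, clarify)
      fix i j assume "(i,j) \<in> insert ij I"
      then consider "(i,j) = (a,b)" | "(i,j) \<in> I" using ij by auto
      then show "convergent (\<lambda>m. X ((s \<circ> t) m) $$ (i,j))"
      proof cases
        case 1
        then show ?thesis using t(2) unfolding convergent_def o_def by auto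
      next
        case 2
        then have "convergent (\<lambda>m. X (s m) $$ (i,j))" using s(2) by auto
        from convergent_subseq_convergent[OF this t(1)] show ?thesis by (simp add: o_def)
      qed
    qed
  qed
qed

lemma subseq_entries:
  fixes X :: "nat \<Rightarrow> real mat"
  assumes bnd: "\<And>m i j. i < nr \<Longrightarrow> j < nc \<Longrightarrow> \<bar>X m $$ (i,j)\<bar> \<le> K"
  shows "\<exists>s L. strict_mono s \<and> L \<in> carrier_mat nr nc \<and>
     (\<forall>i<nr. \<forall>j<nc. (\<lambda>m. X (s m) $$ (i,j)) \<longlonglongrightarrow> L $$ (i,j))"
proof -
  obtain s where s: "strict_mono s" "\<forall>(i,j)\<in>{..<nr} \<times> {..<nc}. convergent (\<lambda>m. X (s m) $$ (i,j))"
  proof -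
    have "\<exists>s. strict_mono s \<and> (\<forall>(i,j)\<in>{..<nr} \<times> {..<nc}. convergent (\<lambda>m. X (s m) $$ (i,j)))"
      by (rule subseq_finite_set[where nr=nr and nc=nc and X=X and K=K]) (use bnd in auto)
    then show ?thesis using that by blast
  qed
  define L where "L = mat nr nc (\<lambda>(i,j). lim (\<lambda>m. X (s m) $$ (i,j)))"
  show ?thesis
  proof (intro exI[of _ s] exI[of _ L] conjI allI impI)
    show "strict_mono s" by fact
    show "L \<in> carrier_mat nr nc" unfolding L_def by simp
    fix i j assume i: "i < nr" and j: "j < nc"
    then have "convergent (\<lambda>m. X (s m) $$ (i,j))" using s(2) by auto
    then show "(\<lambda>m. X (s m) $$ (i,j)) \<longlonglongrightarrow> L $$ (i,j)"
      unfolding L_def using i j by (simp add: convergent_LIMSEQ_iff)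
  qed
qed

lemma det_tendsto:
  fixes A :: "nat \<Rightarrow> real mat"
  assumes A: "\<And>m. A m \<in> carrier_mat n n" and L: "L \<in> carrier_mat n n"
    and conv: "\<And>i j. i < n \<Longrightarrow> j < n \<Longrightarrow> (\<lambda>m. A m $$ (i,j)) \<longlonglongrightarrow> L $$ (i,j)"
  shows "(\<lambda>m. det (A m)) \<longlonglongrightarrow> det L"
proof -
  have "(\<lambda>m. (\<Sum> p \<in> {p. p permutes {0 ..< n}}. signof p * (\<Prod> i = 0 ..< n. A m $$ (i, p i))))
     \<longlonglongrightarrow> (\<Sum> p \<in> {p. p permutes {0 ..< n}}. signof p * (\<Prod> i = 0 ..< n. L $$ (i, p i)))"
  proof (intro tendsto_sum tendsto_mult tendsto_const tendsto_prod)
    fix p i assume "p \<in> {p. p permutes {0 ..< n}}" "i \<in> {0..<n}"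
    then have "i < n" "p i < n" using permutes_nat_less[of p n i] by auto
    then show "(\<lambda>m. A m $$ (i, p i)) \<longlonglongrightarrow> L $$ (i, p i)" by (rule conv)
  qed
  then show ?thesis using det_def'[OF A] det_def'[OF L] by simp
qed

lemma det_bound:
  fixes A :: "real mat"
  assumes A: "A \<in> carrier_mat n n" and K: "K \<ge> 0"
    and bnd: "\<And>i j. i < n \<Longrightarrow> j < n \<Longrightarrow> \<bar>A $$ (i,j)\<bar> \<le> K"
  shows "\<bar>det A\<bar> \<le> fact n * K^n"
proof -
  have "\<bar>det A\<bar> \<le> (\<Sum> p \<in> {p. p permutes {0 ..< n}}. \<bar>signof p * (\<Prod> i = 0 ..< n. A $$ (i, p i))\<bar>)"
    unfolding det_def'[OF A] by (rule sum_abs)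
  also have "\<dots> \<le> (\<Sum> p \<in> {p. p permutes {0 ..< n}}. K^n)"
  proof (rule sum_mono)
    fix p assume p: "p \<in> {p. p permutes {0 ..< n}}"
    have "\<bar>signof p * (\<Prod> i = 0 ..< n. A $$ (i, p i))\<bar> = (\<Prod> i = 0 ..< n. \<bar>A $$ (i, p i)\<bar>)"
      by (simp add: abs_mult abs_prod sign_def)
    also have "\<dots> \<le> (\<Prod> i = 0 ..< n. K)"
      by (rule prod_mono) (use p bnd permutes_nat_less[of p n] in auto)
    finally show "\<bar>signof p * (\<Prod> i = 0 ..< n. A $$ (i, p i))\<bar> \<le> K^n" by simp
  qed
  also have "\<dots> = fact n * K^n" using card_permutations[of "{0..<n}" n] by simp
  finally show ?thesis .
qed



lemma cofactor_bound:
  fixes A :: "real mat"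
  assumes A: "A \<in> carrier_mat n n" and K: "K \<ge> 0"
    and bnd: "\<And>i j. i < n \<Longrightarrow> j < n \<Longrightarrow> \<bar>A $$ (i,j)\<bar> \<le> K"
  shows "\<bar>cofactor A a b\<bar> \<le> fact (n-1) * K^(n-1)"
proof -
  have D: "mat_delete A a b \<in> carrier_mat (n-1) (n-1)" using mat_delete_carrier[OF A] .
  have "\<bar>det (mat_delete A a b)\<bar> \<le> fact (n-1) * K^(n-1)"
  proof (rule det_bound[OF D K])
    fix i j assume "i < n - 1" "j < n - 1"
    then show "\<bar>mat_delete A a b $$ (i,j)\<bar> \<le> K"
      unfolding mat_delete_def using A by (auto intro!: bnd)
  qed
  moreover have "\<bar>cofactor A a b\<bar> = \<bar>det (mat_delete A a b)\<bar>"
    unfolding cofactor_def by (simp add: abs_mult)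
  ultimately show ?thesis by simp
qed

lemma entry_le_absum:
  assumes "i < dim_row A" "j < dim_col A"
  shows "\<bar>A $$ (i,j)\<bar> \<le> absum A"
proof -
  have "\<bar>A $$ (i,j)\<bar> \<le> (\<Sum>j<dim_col A. \<bar>A $$ (i,j)\<bar>)"
    by (rule member_le_sum[where f="\<lambda>j. \<bar>A $$ (i,j)\<bar>"]) (use assms in auto)
  also have "\<dots> \<le> absum A" unfolding absum_def
    by (rule member_le_sum[where f="\<lambda>i. \<Sum>j<dim_col A. \<bar>A $$ (i,j)\<bar>"]) (use assms in \<open>auto intro: sum_nonneg\<close>)
  finally show ?thesis .
qed

lemma absum_bound:
  assumes A: "A \<in> carrier_mat n n" and bnd: "\<And>i j. i < n \<Longrightarrow> j < n \<Longrightarrow> \<bar>A $$ (i,j)\<bar> \<le> c"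
  shows "absum A \<le> real n * real n * c"
proof -
  have "absum A = (\<Sum>i<n. \<Sum>j<n. \<bar>A $$ (i,j)\<bar>)" using A by (simp add: absum_def)
  also have "\<dots> \<le> (\<Sum>i<n. \<Sum>j<n. c)" by (intro sum_mono) (simp add: bnd)
  also have "\<dots> = real n * real n * c" by simp
  finally show ?thesis .
qed

theorem lemmaB3:
  fixes p k r :: nat and \<alpha> \<alpha>perp :: "real mat" and bbar :: real and \<rho>bar :: real
    and \<B> :: "real mat set"
  assumes "p \<ge> 1" and "k \<ge> 1" and "r < p"
    and "\<alpha> \<in> carrier_mat p r" and "vec_space.rank p \<alpha> = r"
    and "\<alpha>perp \<in> carrier_mat p (p - r)" and "vec_space.rank p \<alpha>perp = p - r"
    and "transpose_mat \<alpha>perp * \<alpha> = 0\<^sub>m (p - r) r"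
    and "closed_mat_set (k*p) (p*(k-1) + r) \<B>"
    and "\<forall>\<beta>\<in>\<B>. op_norm \<beta> \<le> bbar"
    and "jsr (p*(k-1) + r)
           ((\<lambda>\<beta>. 1\<^sub>m (p*(k-1) + r) + transpose_mat \<beta> * bold_alpha p k \<alpha>) ` \<B>) \<le> ereal \<rho>bar"
    and "\<rho>bar < 1"
  shows "(\<forall>\<beta>\<in>\<B>. invertible_mat (transpose_mat (bold_alpha_perp p k \<alpha>perp) @\<^sub>r transpose_mat \<beta>))
       \<and> (\<exists>C. \<forall>\<beta>\<in>\<B>. \<forall>N.
             inverts_mat (transpose_mat (bold_alpha_perp p k \<alpha>perp) @\<^sub>r transpose_mat \<beta>) N
             \<and> inverts_mat N (transpose_mat (bold_alpha_perp p k \<alpha>perp) @\<^sub>r transpose_mat \<beta>)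
             \<longrightarrow> op_norm N \<le> C)"
proof -
  note k1 = assms(2) and rp = assms(3) and \<alpha> = assms(4) and r\<alpha> = assms(5) and \<alpha>p = assms(6)
    and r\<alpha>p = assms(7) and orth = assms(8) and closed = assms(9) and nb = assms(10)
    and J = assms(11) and \<rho>1 = assms(12)
  define m where "m = p*(k-1)"
  define n where "n = k*p"
  define NN where "NN = p*(k-1) + r"
  have kp: "n = p + m" unfolding m_def n_def using k1
    by (metis Suc_diff_le diff_Suc_1 mult.commute mult_Suc_right)
  define T where "T = transpose_mat (bold_alpha_perp p k \<alpha>perp)"
  define G where "G = (\<lambda>\<beta>. T @\<^sub>r transpose_mat \<beta>)"
  have S: "1\<^sub>m p @\<^sub>r (- E_mat p k) \<in> carrier_mat (p + m) p" unfolding E_mat_def m_def by auto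
  have T: "T \<in> carrier_mat (p - r) n"
    unfolding T_def bold_alpha_perp_def using S \<alpha>p kp by auto
  have Bsub: "\<B> \<subseteq> carrier_mat n NN" using closed unfolding closed_mat_set_def n_def NN_def by simp
  have Gc: "G \<beta> \<in> carrier_mat n n" if "\<beta> \<in> carrier_mat n NN" for \<beta>
  proof -
    have "G \<beta> \<in> carrier_mat (p - r + NN) n" unfolding G_def using T that by auto
    moreover have "p - r + NN = n" unfolding NN_def using kp m_def rp by simp
    ultimately show ?thesis by simp
  qed
  have Gentry: "G \<beta> $$ (i,j) = (if i < p - r then T $$ (i,j) else \<beta> $$ (j, i - (p - r)))"
    if \<beta>: "\<beta> \<in> carrier_mat n NN" and i: "i < n" and j: "j < n" for \<beta> i j
  proof -
    have "i < p - r + NN" using i kp rp unfolding NN_def m_def by simp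
    then show ?thesis unfolding G_def append_rows_def using T \<beta> i j by auto
  qed
  have Bc: "bold_alpha p k \<alpha> \<in> carrier_mat n NN"
    unfolding bold_alpha_def E_mat_def NN_def using \<alpha> kp m_def by (auto simp: add.commute)
  have noeig: "y = 0\<^sub>v NN"
    if \<beta>: "\<beta> \<in> \<B>" and y: "y \<in> carrier_vec NN"
      and My: "(1\<^sub>m NN + transpose_mat \<beta> * bold_alpha p k \<alpha>) *\<^sub>v y = y" for \<beta> y
  proof (rule ccontr)
    assume y0: "y \<noteq> 0\<^sub>v NN"
    have Mc: "1\<^sub>m NN + transpose_mat \<beta> * bold_alpha p k \<alpha> \<in> carrier_mat NN NN"
      using Bsub \<beta> Bc by auto
    have "1 \<le> jsr NN ((\<lambda>\<beta>. 1\<^sub>m NN + transpose_mat \<beta> * bold_alpha p k \<alpha>) ` \<B>)"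
      by (rule jsr_ge_1[OF Mc _ y y0 My]) (use \<beta> in auto)
    then have "(1::ereal) \<le> ereal \<rho>bar" using J unfolding NN_def by (rule order.trans)
    then show False using \<rho>1 by simp
  qed
  have detnz: "det (G \<beta>) \<noteq> 0" if \<beta>: "\<beta> \<in> \<B>" for \<beta>
  proof (rule trivial_kernel_invertible[OF Gc])
    show "\<beta> \<in> carrier_mat n NN" using \<beta> Bsub by auto
    fix x assume x: "x \<in> carrier_vec n" and Gx: "G \<beta> *\<^sub>v x = 0\<^sub>v n"
    show "x = 0\<^sub>v n" unfolding n_def
    proof (rule G_kernel[OF k1 less_imp_le[OF rp] \<alpha> r\<alpha> \<alpha>p r\<alpha>p orth])
      show "\<beta> \<in> carrier_mat (k * p) (p * (k - 1) + r)" using \<beta> Bsub n_def NN_def by auto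
      show "\<And>y. y \<in> carrier_vec (p * (k - 1) + r) \<Longrightarrow>
         (1\<^sub>m (p * (k - 1) + r) + transpose_mat \<beta> * bold_alpha p k \<alpha>) *\<^sub>v y = y \<Longrightarrow>
         y = 0\<^sub>v (p * (k - 1) + r)" using noeig[OF \<beta>] unfolding NN_def by blast
      show "x \<in> carrier_vec (k * p)" using x n_def by simp
      show "(transpose_mat (bold_alpha_perp p k \<alpha>perp) @\<^sub>r transpose_mat \<beta>) *\<^sub>v x = 0\<^sub>v (k * p)"
        using Gx unfolding G_def T_def n_def .
    qed
  qed
  define K where "K = absum T + \<bar>bbar\<bar>"
  have K0: "K \<ge> 0" unfolding K_def using absum_nonneg[of T] by simp
  have \<beta>bnd: "\<bar>\<beta> $$ (i,j)\<bar> \<le> \<bar>bbar\<bar>" if \<beta>: "\<beta> \<in> \<B>" and i: "i < n" and j: "j < NN" for \<beta> i j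
  proof -
    have "\<beta> \<in> carrier_mat n NN" using \<beta> Bsub by auto
    then have "\<bar>\<beta> $$ (i,j)\<bar> \<le> op_norm \<beta>" using entry_le_op_norm[of i \<beta> j] i j by simp
    also have "\<dots> \<le> bbar" using nb \<beta> by auto
    finally show ?thesis by simp
  qed
  have Gbnd: "\<bar>G \<beta> $$ (i,j)\<bar> \<le> K" if \<beta>: "\<beta> \<in> \<B>" and i: "i < n" and j: "j < n" for \<beta> i j
  proof -
    have \<beta>c: "\<beta> \<in> carrier_mat n NN" using \<beta> Bsub by auto
    show ?thesis
    proof (cases "i < p - r")
      case True
      then have "\<bar>G \<beta> $$ (i,j)\<bar> = \<bar>T $$ (i,j)\<bar>" using Gentry[OF \<beta>c i j] by simp
      also have "\<dots> \<le> absum T" using entry_le_absum[of i T j] True j T by simp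
      finally show ?thesis unfolding K_def by simp
    next
      case False
      then have "\<bar>G \<beta> $$ (i,j)\<bar> = \<bar>\<beta> $$ (j, i - (p - r))\<bar>" using Gentry[OF \<beta>c i j] by simp
      also have "\<dots> \<le> \<bar>bbar\<bar>" using \<beta>bnd[OF \<beta> j] False i kp rp unfolding NN_def m_def by simp
      finally show ?thesis unfolding K_def using absum_nonneg[of T] by simp
    qed
  qed
  have "\<exists>\<delta>>0. \<forall>\<beta>\<in>\<B>. \<delta> \<le> \<bar>det (G \<beta>)\<bar>"
  proof (rule ccontr)
    assume neg: "\<not> ?thesis"
    have "\<forall>m. \<exists>\<beta>. \<beta> \<in> \<B> \<and> \<bar>det (G \<beta>)\<bar> < inverse (real (Suc m))"
    proof
      fix m
      show "\<exists>\<beta>. \<beta> \<in> \<B> \<and> \<bar>det (G \<beta>)\<bar> < inverse (real (Suc m))"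
        using spec[OF neg[unfolded not_ex], of "inverse (real (Suc m))"] by (auto simp: not_le)
    qed
    then obtain X where X: "\<And>m. X m \<in> \<B>" "\<And>m. \<bar>det (G (X m))\<bar> < inverse (real (Suc m))"
      by (auto simp: choice_iff)
    have Xc: "X m \<in> carrier_mat n NN" for m using X(1) Bsub by auto
    obtain s L where s: "strict_mono s" and L: "L \<in> carrier_mat n NN"
      and conv: "\<forall>i<n. \<forall>j<NN. (\<lambda>m. X (s m) $$ (i,j)) \<longlonglongrightarrow> L $$ (i,j)"
    proof -
      have "\<exists>s L. strict_mono s \<and> L \<in> carrier_mat n NN \<and>
          (\<forall>i<n. \<forall>j<NN. (\<lambda>m. X (s m) $$ (i,j)) \<longlonglongrightarrow> L $$ (i,j))"
        by (rule subseq_entries[where K="\<bar>bbar\<bar>"]) (use \<beta>bnd X(1) in auto)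
      then show ?thesis using that by blast
    qed
    have cl: "\<forall>X L. (\<forall>m. X m \<in> \<B>) \<longrightarrow> L \<in> carrier_mat n NN \<longrightarrow>
        (\<forall>i<n. \<forall>j<NN. (\<lambda>m. X m $$ (i,j)) \<longlonglongrightarrow> L $$ (i,j)) \<longrightarrow> L \<in> \<B>"
      using closed unfolding closed_mat_set_def n_def NN_def by simp
    have LB: "L \<in> \<B>"
      using cl[rule_format, of "\<lambda>m. X (s m)" L] L conv X(1) by simp
    have "(\<lambda>m. det (G (X (s m)))) \<longlonglongrightarrow> det (G L)"
    proof (rule det_tendsto[OF Gc[OF Xc] Gc[OF L]])
      fix i j assume i: "i < n" and j: "j < n"
      show "(\<lambda>m. G (X (s m)) $$ (i,j)) \<longlonglongrightarrow> G L $$ (i,j)"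
      proof (cases "i < p - r")
        case True
        then show ?thesis using Gentry[OF Xc i j] Gentry[OF L i j] by simp
      next
        case False
        then have "i - (p - r) < NN" using i kp rp unfolding NN_def m_def by simp
        then show ?thesis using Gentry[OF Xc i j] Gentry[OF L i j] False conv j by simp
      qed
    qed
    moreover have "(\<lambda>m. det (G (X (s m)))) \<longlonglongrightarrow> 0"
    proof (rule Lim_null_comparison)
      show "\<forall>\<^sub>F m in sequentially. norm (det (G (X (s m)))) \<le> inverse (real (Suc m))"
      proof (rule always_eventually, rule allI)
        fix m
        have "norm (det (G (X (s m)))) \<le> inverse (real (Suc (s m)))" using X(2)[of "s m"] by simp
        also have "\<dots> \<le> inverse (real (Suc m))" using seq_suble[OF s, of m] by (simp add: field_simps)
        finally show "norm (det (G (X (s m)))) \<le> inverse (real (Suc m))" .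
      qed
      show "(\<lambda>m. inverse (real (Suc m))) \<longlonglongrightarrow> 0" by (rule LIMSEQ_inverse_real_of_nat)
    qed
    ultimately have "det (G L) = 0" by (rule LIMSEQ_unique)
    then show False using detnz[OF LB] by simp
  qed
  then obtain \<delta> where \<delta>: "\<delta> > 0" "\<And>\<beta>. \<beta> \<in> \<B> \<Longrightarrow> \<delta> \<le> \<bar>det (G \<beta>)\<bar>" by blast
  have Geq: "transpose_mat (bold_alpha_perp p k \<alpha>perp) @\<^sub>r transpose_mat \<beta> = G \<beta>" if "\<beta> \<in> \<B>" for \<beta>
    unfolding G_def T_def by simp
  define c where "c = fact (n-1) * K^(n-1) / \<delta>"
  show ?thesis
  proof (intro conjI ballI exI[of _ "real n * real n * c"] allI impI)
    fix \<beta> assume \<beta>: "\<beta> \<in> \<B>"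
    have Gb: "G \<beta> \<in> carrier_mat n n" using Gc \<beta> Bsub by auto
    note I = inv_from_det[OF Gb detnz[OF \<beta>]]
    show "invertible_mat (transpose_mat (bold_alpha_perp p k \<alpha>perp) @\<^sub>r transpose_mat \<beta>)"
      unfolding invertible_mat_def inverts_mat_def Geq[OF \<beta>]
      using I Gb by (intro conjI exI[of _ "(1 / det (G \<beta>)) \<cdot>\<^sub>m adj_mat (G \<beta>)"]) (auto simp: square_mat.simps)
  next
    fix \<beta> N assume \<beta>: "\<beta> \<in> \<B>" and inv:
      "inverts_mat (transpose_mat (bold_alpha_perp p k \<alpha>perp) @\<^sub>r transpose_mat \<beta>) N
       \<and> inverts_mat N (transpose_mat (bold_alpha_perp p k \<alpha>perp) @\<^sub>r transpose_mat \<beta>)"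
    have Gb: "G \<beta> \<in> carrier_mat n n" using Gc \<beta> Bsub by auto
    note I = inv_from_det[OF Gb detnz[OF \<beta>]]
    have GN: "G \<beta> * N = 1\<^sub>m n" and NG: "N * G \<beta> = 1\<^sub>m (dim_row N)"
      using inv Gb unfolding inverts_mat_def Geq[OF \<beta>] by auto
    have Nc: "N \<in> carrier_mat n n"
    proof -
      have "dim_col N = n" using arg_cong[OF GN, of dim_col] by simp
      moreover have "dim_row N = n" using arg_cong[OF NG, of dim_col] Gb by simp
      ultimately show ?thesis by auto
    qed
    let ?Gi = "(1 / det (G \<beta>)) \<cdot>\<^sub>m adj_mat (G \<beta>)"
    have "N = N * (G \<beta> * ?Gi)" using I(1) Nc by simp
    also have "\<dots> = (N * G \<beta>) * ?Gi" using assoc_mult_mat[OF Nc Gb I(3)] by simp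
    also have "\<dots> = ?Gi" using NG Nc I(3) left_mult_one_mat[OF I(3)] by simp
    finally have NGi: "N = ?Gi" .
    have dpos: "0 < \<bar>det (G \<beta>)\<bar>" using \<delta>(1) \<delta>(2)[OF \<beta>] by simp
    have Nbnd: "\<bar>N $$ (i,j)\<bar> \<le> c" if i: "i < n" and j: "j < n" for i j
    proof -
      have "N $$ (i,j) = cofactor (G \<beta>) j i / det (G \<beta>)"
        using NGi i j Gb unfolding adj_mat_def by simp
      then have "\<bar>N $$ (i,j)\<bar> = \<bar>cofactor (G \<beta>) j i\<bar> / \<bar>det (G \<beta>)\<bar>" by (simp add: abs_divide)
      also have "\<dots> \<le> fact (n-1) * K^(n-1) / \<bar>det (G \<beta>)\<bar>"
        by (rule divide_right_mono[OF cofactor_bound[OF Gb K0]]) (use Gbnd[OF \<beta>] in auto)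
      also have "\<dots> \<le> fact (n-1) * K^(n-1) / \<delta>"
        by (rule divide_left_mono) (use \<delta> \<beta> dpos K0 in auto)
      finally show ?thesis unfolding c_def .
    qed
    have "op_norm N \<le> absum N" by (rule op_norm_le_absum)
    also have "\<dots> \<le> real n * real n * c" by (rule absum_bound[OF Nc Nbnd])
    finally show "op_norm N \<le> real n * real n * c" .
  qed
qed

end
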